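(* Consider a Why Query with the \texttt{SUM} aggregate, an attribute $X$ with filters $p_1,\dots,p_m$, a threshold $\varepsilon$ and a conciseness parameter $\sigma>0$. If $P^*\subseteq\{p_1,\dots,p_m\}$ is an optimal explanation, i.e. $P^*$ maximizes $\rho_P-\sigma|P|$ over all $P\subseteq\{p_1,\dots,p_m\}$, then $\Delta(D_p)>0$ for every $p\in P^*$.
   Context: $D$ is a finite table of rows; $M$ is a numerical column; $s_1,s_2$ are two disjoint sets of rows (sibling subspaces). $X$ is a categorical column with values $x_1,\dots,x_m$; filter $p_i$ is the condition $X=x_i$. A predicate is a set $P\subseteq\{p_1,\dots,p_m\}$ and $D_P$ is the set of rows whose $X$-value belongs to $P$; $|P|$ is the number of filters in $P$; $D'-D''$ denotes set difference of rows. For $D'\subseteq D$, $\Delta(D')=\sum_{t\in D'\cap s_1}t[M]-\sum_{t\in D'\cap s_2}t[M]$. It is assumed $\Delta(D)>0$. W-causality: $P$ is an actual cause if there exists $\Gamma\subseteq\{p_1,\dots,p_m\}$ with $\Gamma\cap P=\emptyset$ (a valid contingency) such that $\Delta(D-D_\Gamma-D_P)\le\varepsilon<\Delta(D-D_\Gamma)$. W-responsibility: for an actual cause $P$, $\rho_P=\frac{1}{1+\min_\Gamma|\Gamma|_W}$ where $\Gamma$ ranges over valid contingencies for $P$ and $|\Gamma|_W=\max\left(\frac{\Delta(D-D_P)-\Delta(D-D_P-D_\Gamma)}{\Delta(D)},0\right)$; $\rho_P=0$ if $P$ is not an actual cause. *)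

theory Defs
  imports Complex_Main
begin

text \<open>Rows have type 'r; the numerical column M is a function 'r => real; the
categorical column X is a function 'r => 'v.  The filter p_i (X = x_i) is identified
with the value x_i, so a predicate is a set of values P \<subseteq> V, where V = {x_1,...,x_m}.\<close>

definition Delta :: "'r set \<Rightarrow> 'r set \<Rightarrow> ('r \<Rightarrow> real) \<Rightarrow> 'r set \<Rightarrow> real" where
  "Delta s1 s2 M D' = (\<Sum>t\<in>D' \<inter> s1. M t) - (\<Sum>t\<in>D' \<inter> s2. M t)"

definition rows_sel :: "'r set \<Rightarrow> ('r \<Rightarrow> 'v) \<Rightarrow> 'v set \<Rightarrow> 'r set" where
  "rows_sel D X P = {t \<in> D. X t \<in> P}"

definition valid_contingency ::
  "'r set \<Rightarrow> ('r \<Rightarrow> 'v) \<Rightarrow> 'v set \<Rightarrow> 'r set \<Rightarrow> 'r set \<Rightarrow> ('r \<Rightarrow> real) \<Rightarrow> real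
   \<Rightarrow> 'v set \<Rightarrow> 'v set \<Rightarrow> bool" where
  "valid_contingency D X V s1 s2 M eps P \<Gamma> \<longleftrightarrow>
     \<Gamma> \<subseteq> V \<and> \<Gamma> \<inter> P = {} \<and>
     Delta s1 s2 M (D - rows_sel D X \<Gamma> - rows_sel D X P) \<le> eps \<and>
     eps < Delta s1 s2 M (D - rows_sel D X \<Gamma>)"

definition actual_cause ::
  "'r set \<Rightarrow> ('r \<Rightarrow> 'v) \<Rightarrow> 'v set \<Rightarrow> 'r set \<Rightarrow> 'r set \<Rightarrow> ('r \<Rightarrow> real) \<Rightarrow> real
   \<Rightarrow> 'v set \<Rightarrow> bool" where
  "actual_cause D X V s1 s2 M eps P \<longleftrightarrow> (\<exists>\<Gamma>. valid_contingency D X V s1 s2 M eps P \<Gamma>)"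

definition W_size ::
  "'r set \<Rightarrow> ('r \<Rightarrow> 'v) \<Rightarrow> 'r set \<Rightarrow> 'r set \<Rightarrow> ('r \<Rightarrow> real) \<Rightarrow> 'v set \<Rightarrow> 'v set \<Rightarrow> real" where
  "W_size D X s1 s2 M P \<Gamma> =
     max ((Delta s1 s2 M (D - rows_sel D X P)
           - Delta s1 s2 M (D - rows_sel D X P - rows_sel D X \<Gamma>)) / Delta s1 s2 M D) 0"

definition W_resp ::
  "'r set \<Rightarrow> ('r \<Rightarrow> 'v) \<Rightarrow> 'v set \<Rightarrow> 'r set \<Rightarrow> 'r set \<Rightarrow> ('r \<Rightarrow> real) \<Rightarrow> real
   \<Rightarrow> 'v set \<Rightarrow> real" where
  "W_resp D X V s1 s2 M eps P =
     (if actual_cause D X V s1 s2 M eps P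
      then 1 / (1 + Min (W_size D X s1 s2 M P ` {\<Gamma>. valid_contingency D X V s1 s2 M eps P \<Gamma>}))
      else 0)"

end

theory Submission
  imports Defs
begin

lemma delta_split:
  assumes "finite A"
  shows "Delta s1 s2 M A = Delta s1 s2 M (A - B) + Delta s1 s2 M (A \<inter> B)"
proof -
  have "(\<Sum>t\<in>A \<inter> s1. M t) = (\<Sum>t\<in>(A \<inter> s1) \<inter> B. M t) + (\<Sum>t\<in>(A \<inter> s1) - B. M t)"
    using assms by (simp add: sum.Int_Diff)
  moreover have "(\<Sum>t\<in>A \<inter> s2. M t) = (\<Sum>t\<in>(A \<inter> s2) \<inter> B. M t) + (\<Sum>t\<in>(A \<inter> s2) - B. M t)"
    using assms by (simp add: sum.Int_Diff)
  moreover have "(A \<inter> s1) \<inter> B = (A \<inter> B) \<inter> s1" "(A \<inter> s1) - B = (A - B) \<inter> s1"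
    "(A \<inter> s2) \<inter> B = (A \<inter> B) \<inter> s2" "(A \<inter> s2) - B = (A - B) \<inter> s2" by auto
  ultimately show ?thesis unfolding Delta_def by simp
qed

lemma wsize_eq:
  assumes "finite D" "\<Gamma> \<inter> P = {}"
  shows "W_size D X s1 s2 M P \<Gamma> = max (Delta s1 s2 M (rows_sel D X \<Gamma>) / Delta s1 s2 M D) 0"
proof -
  have f: "finite (D - rows_sel D X P)" using assms by simp
  have "(D - rows_sel D X P) \<inter> rows_sel D X \<Gamma> = rows_sel D X \<Gamma>"
    using assms(2) unfolding rows_sel_def by auto
  then show ?thesis unfolding W_size_def
    using delta_split[OF f, of s1 s2 M "rows_sel D X \<Gamma>"] by simp
qed

theorem proposition3p14:
  fixes D s1 s2 :: "'r set" and M :: "'r \<Rightarrow> real" and X :: "'r \<Rightarrow> 'v"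
    and V :: "'v set" and eps sigma :: real and Pstar :: "'v set"
  assumes "finite D"
    and "finite V"
    and "\<forall>t\<in>D. X t \<in> V"
    and "s1 \<inter> s2 = {}"
    and "Delta s1 s2 M D > 0"
    and "sigma > 0"
    and "Pstar \<subseteq> V"
    and "\<forall>P. P \<subseteq> V \<longrightarrow>
           W_resp D X V s1 s2 M eps P - sigma * real (card P)
             \<le> W_resp D X V s1 s2 M eps Pstar - sigma * real (card Pstar)"
  shows "\<forall>p\<in>Pstar. Delta s1 s2 M (rows_sel D X {p}) > 0"
proof (rule ccontr)
  assume "\<not> ?thesis"
  then obtain p where pP: "p \<in> Pstar" and dp: "Delta s1 s2 M (rows_sel D X {p}) \<le> 0"
    by force
  define P' where "P' = Pstar - {p}"
  have finP: "finite Pstar" using assms(2,7) finite_subset by blast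
  have cardP': "real (card P') = real (card Pstar) - 1"
  proof -
    have "card Pstar \<ge> 1" using finP pP card_gt_0_iff by (metis One_nat_def Suc_leI empty_iff)
    moreover have "card P' = card Pstar - 1" unfolding P'_def using finP pP by simp
    ultimately show ?thesis by (simp add: of_nat_diff)
  qed
  have P'V: "P' \<subseteq> V" using assms(7) P'_def by auto
  have ws_nonneg: "\<And>P G. W_size D X s1 s2 M P G \<ge> 0" unfolding W_size_def by simp
  have valid_trans: "valid_contingency D X V s1 s2 M eps P' G"
    if v: "valid_contingency D X V s1 s2 M eps Pstar G" for G
  proof -
    define A where "A = D - rows_sel D X G - rows_sel D X P'"
    have fA: "finite A" using assms(1) A_def by simp
    have GP: "G \<inter> Pstar = {}" using v unfolding valid_contingency_def by auto
    have e1: "A - rows_sel D X {p} = D - rows_sel D X G - rows_sel D X Pstar"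
      unfolding A_def P'_def rows_sel_def using pP by auto
    have e2: "A \<inter> rows_sel D X {p} = rows_sel D X {p}"
      unfolding A_def P'_def rows_sel_def using pP GP by auto
    have "Delta s1 s2 M A \<le> eps"
      using delta_split[OF fA, of s1 s2 M "rows_sel D X {p}"] e1 e2 dp v
      unfolding valid_contingency_def by simp
    then show ?thesis using v GP unfolding valid_contingency_def A_def P'_def by auto
  qed
  have ws_eq: "W_size D X s1 s2 M P' G = W_size D X s1 s2 M Pstar G"
    if v: "valid_contingency D X V s1 s2 M eps Pstar G" for G
  proof -
    have GP: "G \<inter> Pstar = {}" using v unfolding valid_contingency_def by auto
    hence "G \<inter> P' = {}" unfolding P'_def by auto
    thus ?thesis using wsize_eq[OF assms(1) GP] wsize_eq[OF assms(1)] by simp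
  qed
  have resp_nonneg: "W_resp D X V s1 s2 M eps P' \<ge> 0"
  proof (cases "actual_cause D X V s1 s2 M eps P'")
    case True
    let ?S = "W_size D X s1 s2 M P' ` {G. valid_contingency D X V s1 s2 M eps P' G}"
    have "finite {G. valid_contingency D X V s1 s2 M eps P' G}"
      using assms(2) by (rule finite_subset[rotated, OF finite_Pow_iff[THEN iffD2]])
        (auto simp: valid_contingency_def)
    hence "finite ?S" by simp
    moreover have "?S \<noteq> {}" using True unfolding actual_cause_def by auto
    ultimately have "Min ?S \<ge> 0" using ws_nonneg by auto
    thus ?thesis using True by (simp add: W_resp_def)
  qed (simp add: W_resp_def)
  have resp_ge: "W_resp D X V s1 s2 M eps P' \<ge> W_resp D X V s1 s2 M eps Pstar"
  proof (cases "actual_cause D X V s1 s2 M eps Pstar")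
    case False
    then show ?thesis using resp_nonneg unfolding W_resp_def by simp
  next
    case True
    then obtain G0 where G0: "valid_contingency D X V s1 s2 M eps Pstar G0"
      unfolding actual_cause_def by auto
    have ac': "actual_cause D X V s1 s2 M eps P'"
      using valid_trans[OF G0] unfolding actual_cause_def by auto
    let ?S = "W_size D X s1 s2 M Pstar ` {G. valid_contingency D X V s1 s2 M eps Pstar G}"
    let ?S' = "W_size D X s1 s2 M P' ` {G. valid_contingency D X V s1 s2 M eps P' G}"
    have fin: "finite {G. valid_contingency D X V s1 s2 M eps Q G}" for Q
      using assms(2) by (rule finite_subset[rotated, OF finite_Pow_iff[THEN iffD2]])
        (auto simp: valid_contingency_def)
    have sub: "?S \<subseteq> ?S'"
    proof
      fix y assume "y \<in> ?S"
      then obtain G where G: "valid_contingency D X V s1 s2 M eps Pstar G"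
        and y: "y = W_size D X s1 s2 M Pstar G" by auto
      show "y \<in> ?S'" using valid_trans[OF G] ws_eq[OF G] y by force
    qed
    have neS: "?S \<noteq> {}" using G0 by auto
    have le: "Min ?S' \<le> Min ?S"
      using Min_antimono[OF sub neS] fin by simp
    have nn: "Min ?S' \<ge> 0" using fin neS sub ws_nonneg
      by (metis (no_types, lifting) Min_in empty_subsetI finite_imageI imageE subset_antisym)
    have "1 / (1 + Min ?S) \<le> 1 / (1 + Min ?S')"
      using le nn by (simp add: frac_le)
    then show ?thesis unfolding W_resp_def using True ac' by simp
  qed
  have "W_resp D X V s1 s2 M eps P' - sigma * real (card P')
          \<le> W_resp D X V s1 s2 M eps Pstar - sigma * real (card Pstar)"
    using assms(8) P'V by blast
  then show False using cardP' resp_ge assms(6) by (simp add: algebra_simps)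
qed

end
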